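(* Let $s\in(0,1)$, $p,q\in[1,\infty)$, and $f:\mathbb{R}^n\to\mathbb{R}$ measurable. Then $$n\,\omega_n^{\frac{n+sq}{n}}\,|\Pi^{*,s}_{p,q}f|^{-\frac{sq}{n}}\le\int_{\mathbb{R}^n}|h|^{-sq}\|\Delta_hf\|_{L^p}^q\,\frac{dh}{|h|^n}.$$ In particular, there is a constant $C$ depending only on $n,p,q$ such that $|\Pi^{*,s}_{p,q}f|^{-\frac{sq}{n}}\le C\|f\|^q_{B^s_{p,q}}$.
   Context: $\omega_n=|B^n|$, $\Delta_hf(x)=f(x+h)-f(x)$. $\Pi^{*,s}_{p,q}f$ is the star-shaped set with gauge $\|\xi\|_{\Pi^{*,s}_{p,q}f}^{sq}=\int_0^\infty t^{-sq}\|\Delta_{t\xi}f\|_{L^p}^q\frac{dt}{t}$ and volume $\frac1n\int_{\mathbb{S}^{n-1}}\|\xi\|^{-n}_{\Pi^{*,s}_{p,q}f}d\sigma(\xi)$. $\omega(f,t)_p=(\frac{1}{t^n\omega_n}\int_{|h|<t}\|\Delta_hf\|^p_{L^p}dh)^{1/p}$ and $\|f\|_{B^s_{p,q}}=(\int_0^\infty t^{-sq}\omega(f,t)_p^q\frac{dt}{t})^{1/q}$. *)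

theory Defs
  imports "HOL-Analysis.Analysis"
begin

definition epow :: "ennreal \<Rightarrow> real \<Rightarrow> ennreal" where
  "epow x a =
     (if a = 0 then 1
      else if x = 0 then (if a < 0 then \<infinity> else 0)
      else if x = \<infinity> then (if a > 0 then \<infinity> else 0)
      else ennreal (enn2real x powr a))"

definition omega_n :: "'a::euclidean_space itself \<Rightarrow> real" where
  "omega_n _ = measure lborel (ball (0::'a) 1)"

definition diffLp_pow :: "('a::euclidean_space \<Rightarrow> real) \<Rightarrow> real \<Rightarrow> 'a \<Rightarrow> ennreal" where
  "diffLp_pow f p h = (\<integral>\<^sup>+ x. ennreal (\<bar>f (x + h) - f x\<bar> powr p) \<partial>lebesgue)"

definition diffLp :: "('a::euclidean_space \<Rightarrow> real) \<Rightarrow> real \<Rightarrow> 'a \<Rightarrow> ennreal" where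
  "diffLp f p h = epow (diffLp_pow f p h) (1 / p)"

definition polar_gauge :: "('a::euclidean_space \<Rightarrow> real) \<Rightarrow> real \<Rightarrow> real \<Rightarrow> real \<Rightarrow> 'a \<Rightarrow> ennreal" where
  "polar_gauge f s p q \<xi> =
     epow (\<integral>\<^sup>+ t \<in> {0<..}. epow (ennreal t) (- s * q) * epow (diffLp f p (t *\<^sub>R \<xi>)) q
              * ennreal (1 / t) \<partial>lborel) (1 / (s * q))"

definition polar_proj_body :: "('a::euclidean_space \<Rightarrow> real) \<Rightarrow> real \<Rightarrow> real \<Rightarrow> real \<Rightarrow> 'a set" where
  "polar_proj_body f s p q = {\<xi>. polar_gauge f s p q \<xi> \<le> 1}"

definition modulus :: "('a::euclidean_space \<Rightarrow> real) \<Rightarrow> real \<Rightarrow> real \<Rightarrow> ennreal" where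
  "modulus f p t =
     epow (ennreal (1 / (t ^ DIM('a) * omega_n TYPE('a)))
           * (\<integral>\<^sup>+ h \<in> ball 0 t. epow (diffLp f p h) p \<partial>lebesgue)) (1 / p)"

definition besov_norm :: "('a::euclidean_space \<Rightarrow> real) \<Rightarrow> real \<Rightarrow> real \<Rightarrow> real \<Rightarrow> ennreal" where
  "besov_norm f s p q =
     epow (\<integral>\<^sup>+ t \<in> {0<..}. epow (ennreal t) (- s * q) * epow (modulus f p t) q
              * ennreal (1 / t) \<partial>lborel) (1 / q)"

end

theory Submission
  imports Defs
begin

lemma pred_in_ball[measurable (raw)]:
  fixes f :: "'b \<Rightarrow> 'a::euclidean_space"
  shows "f \<in> M \<rightarrow>\<^sub>M borel \<Longrightarrow> c \<in> M \<rightarrow>\<^sub>M borel \<Longrightarrow> r \<in> M \<rightarrow>\<^sub>M borel \<Longrightarrow> Measurable.pred M (\<lambda>x. f x \<in> ball (c x) (r x))"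
  unfolding mem_ball dist_norm by measurable

lemma pred_in_greaterThan[measurable (raw)]:
  fixes f :: "'b \<Rightarrow> real"
  shows "f \<in> M \<rightarrow>\<^sub>M borel \<Longrightarrow> g \<in> M \<rightarrow>\<^sub>M borel \<Longrightarrow> Measurable.pred M (\<lambda>x. f x \<in> {g x<..})"
  unfolding greaterThan_iff by measurable

lemma borel_epow: "(\<lambda>x. epow x a) \<in> borel \<rightarrow>\<^sub>M (borel :: ennreal measure)"
  unfolding epow_def
  apply (intro measurable_If measurable_const)
  apply (simp_all add: pred_def[symmetric])
  apply measurable
  done

lemma measurable_epow[measurable (raw)]:
  "F \<in> M \<rightarrow>\<^sub>M borel \<Longrightarrow> (\<lambda>x. epow (F x) a) \<in> M \<rightarrow>\<^sub>M borel"
  using measurable_compose[OF _ borel_epow] by blast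

lemma epow_ennreal: "0 < t \<Longrightarrow> epow (ennreal t) a = ennreal (t powr a)"
  by (simp add: epow_def)

lemma epow_0_pos[simp]: "0 < a \<Longrightarrow> epow 0 a = 0" by (simp add: epow_def)
lemma epow_0_neg[simp]: "a < 0 \<Longrightarrow> epow 0 a = \<infinity>" by (simp add: epow_def)
lemma epow_top_pos[simp]: "0 < a \<Longrightarrow> epow \<infinity> a = \<infinity>" by (simp add: epow_def)
lemma epow_top_neg[simp]: "a < 0 \<Longrightarrow> epow \<infinity> a = 0" by (simp add: epow_def)
lemma epow_zero_exp[simp]: "epow x 0 = 1" by (simp add: epow_def)

lemma epow_cases:
  obtains "x = 0" | "x = \<infinity>" | t where "0 < t" "x = ennreal t"
proof (cases x)
  case (real r) then show ?thesis using that by (cases "r = 0") auto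
qed (use that in auto)

lemma epow_one[simp]: "epow x 1 = x"
  by (cases x rule: epow_cases) (auto simp: epow_ennreal epow_def)

lemma epow_epow:
  assumes "0 < a"
  shows "epow (epow x a) b = epow x (a * b)"
proof (cases x rule: epow_cases)
  case 1 then show ?thesis using assms
    by (cases "b = 0"; cases "b < 0") (auto simp: epow_def zero_less_mult_iff mult_less_0_iff)
next
  case 2 then show ?thesis using assms
    by (cases "b = 0"; cases "b < 0") (auto simp: epow_def zero_less_mult_iff mult_less_0_iff)
next
  case (3 t) then show ?thesis using assms
    by (simp add: epow_ennreal powr_powr)
qed

lemma epow_mono:
  assumes "0 < a" "x \<le> y"
  shows "epow x a \<le> epow y a"
proof (cases x rule: epow_cases)
  case 1 then show ?thesis using assms by simp
next
  case 2 then show ?thesis using assms by (simp add: top_unique)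
next
  case (3 t)
  show ?thesis
  proof (cases y rule: epow_cases)
    case 1 then show ?thesis using assms 3 by simp
  next
    case 2 then show ?thesis using assms by (simp add: epow_def)
  next
    case (3 u)
    then show ?thesis using assms \<open>0<t\<close> \<open>x = ennreal t\<close>
      by (simp add: epow_ennreal powr_mono2)
  qed
qed

lemma epow_antimono:
  assumes "a < 0" "x \<le> y"
  shows "epow y a \<le> epow x a"
proof (cases x rule: epow_cases)
  case 1 then show ?thesis using assms by simp
next
  case 2 then show ?thesis using assms by (simp add: top_unique)
next
  case (3 t)
  show ?thesis
  proof (cases y rule: epow_cases)
    case 1 then show ?thesis using assms 3 by simp
  next
    case 2 then show ?thesis using assms by (simp add: epow_def)
  next
    case (3 u)
    then show ?thesis using assms \<open>0<t\<close> \<open>x = ennreal t\<close>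
      by (simp add: epow_ennreal powr_mono2')
  qed
qed

lemma epow_le1_iff:
  assumes "0 < a" shows "epow x a \<le> 1 \<longleftrightarrow> x \<le> 1"
proof (cases x rule: epow_cases)
  case (3 t) 
  have "t powr a \<le> 1 \<longleftrightarrow> t \<le> 1" using assms \<open>0<t\<close>
  proof -
    have "t powr a \<le> 1 \<longleftrightarrow> ln (t powr a) \<le> 0" using \<open>0<t\<close> by (subst ln_le_zero_iff) auto
    also have "\<dots> \<longleftrightarrow> ln t \<le> 0" using \<open>0<t\<close> assms by (simp add: ln_powr mult_le_0_iff)
    also have "\<dots> \<longleftrightarrow> t \<le> 1" using \<open>0<t\<close> by simp
    finally show ?thesis .
  qed
  then show ?thesis using 3 by (simp add: epow_ennreal)
qed (use assms in \<open>auto simp: epow_def\<close>)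

lemma epow_mult_const:
  assumes "0 < c"
  shows "epow (ennreal c * x) a = ennreal (c powr a) * epow x a"
proof (cases x rule: epow_cases)
  case 1 then show ?thesis using assms by (cases "a = 0"; cases "a < 0") (auto simp: epow_def ennreal_mult_top)
next
  case 2 then show ?thesis using assms
    by (cases "a = 0"; cases "a < 0") (auto simp: epow_def ennreal_mult_top)
next
  case (3 t) then show ?thesis using assms
    by (simp add: epow_ennreal ennreal_mult[symmetric] powr_mult)
qed

lemma nn_integral_affine_euclid:
  fixes F :: "'a::euclidean_space \<Rightarrow> ennreal"
  assumes F[measurable]: "F \<in> borel_measurable borel" and c: "c \<noteq> 0"
  shows "(\<integral>\<^sup>+x. F x \<partial>lborel) = ennreal (\<bar>c\<bar> ^ DIM('a)) * (\<integral>\<^sup>+x. F (t + c *\<^sub>R x) \<partial>lborel)"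
proof -
  have "(\<integral>\<^sup>+x. F x \<partial>lborel) = (\<integral>\<^sup>+x. F x \<partial>density (distr lborel borel (\<lambda>x. t + c *\<^sub>R x)) (\<lambda>_. ennreal (\<bar>c\<bar> ^ DIM('a))))"
    by (subst lborel_affine[OF c, of t]) simp
  also have "\<dots> = (\<integral>\<^sup>+x. ennreal (\<bar>c\<bar> ^ DIM('a)) * F x \<partial>distr lborel borel (\<lambda>x. t + c *\<^sub>R x))"
    by (subst nn_integral_density) auto
  also have "\<dots> = (\<integral>\<^sup>+x. ennreal (\<bar>c\<bar> ^ DIM('a)) * F (t + c *\<^sub>R x) \<partial>lborel)"
    by (subst nn_integral_distr) auto
  also have "\<dots> = ennreal (\<bar>c\<bar> ^ DIM('a)) * (\<integral>\<^sup>+x. F (t + c *\<^sub>R x) \<partial>lborel)"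
    by (rule nn_integral_cmult) measurable
  finally show ?thesis .
qed

lemma nn_integral_translate:
  fixes F :: "'a::euclidean_space \<Rightarrow> ennreal"
  assumes F[measurable]: "F \<in> borel_measurable borel"
  shows "(\<integral>\<^sup>+x. F (x + k) \<partial>lborel) = (\<integral>\<^sup>+x. F x \<partial>lborel)"
  using nn_integral_affine_euclid[OF F, of 1 k] by (simp add: add.commute)

lemma borel_rep:
  fixes f :: "'a::euclidean_space \<Rightarrow> real"
  assumes "f \<in> borel_measurable lebesgue"
  obtains g where "g \<in> borel_measurable borel"
    "\<And>h. diffLp_pow f p h = (\<integral>\<^sup>+x. ennreal (\<bar>g (x + h) - g x\<bar> powr p) \<partial>lborel)"
proof -
  obtain g where g: "g \<in> borel_measurable lborel" and ae: "AE x in lborel. f x = g x"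
    using completion_ex_borel_measurable_real[OF assms] by blast
  have gb[measurable]: "g \<in> borel_measurable borel" using g by simp
  obtain N where N: "{x \<in> space lborel. \<not> f x = g x} \<subseteq> N" "N \<in> null_sets lborel"
    by (rule AE_E[OF ae]) blast
  have Nb[measurable]: "N \<in> sets borel" using N(2) by (simp add: null_sets_def)
  have AEN: "AE x in lborel. x \<notin> N" using N(2) by (rule AE_not_in)
  have AEh: "AE x in lborel. x + h \<notin> N" for h :: 'a
  proof -
    have "AE x in distr lborel borel ((+) h). x \<notin> N"
      using AEN by (simp only: lborel_distr_plus[of h])
    then show ?thesis by (subst (asm) AE_distr_iff) (auto simp: add.commute)
  qed
  show ?thesis
  proof (rule that[OF gb])
    fix h :: 'a
    have "AE x in lborel. f (x + h) = g (x + h) \<and> f x = g x"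
      using AEh[of h] AEN by eventually_elim (use N(1) in auto)
    then have "AE x in lebesgue. ennreal (\<bar>f (x + h) - f x\<bar> powr p) = ennreal (\<bar>g (x + h) - g x\<bar> powr p)"
      by (rule AE_completion[OF AE_mp]) auto
    then have "diffLp_pow f p h = (\<integral>\<^sup>+x. ennreal (\<bar>g (x + h) - g x\<bar> powr p) \<partial>lebesgue)"
      unfolding diffLp_pow_def by (rule nn_integral_cong_AE)
    also have "\<dots> = (\<integral>\<^sup>+x. ennreal (\<bar>g (x + h) - g x\<bar> powr p) \<partial>lborel)"
      by (rule nn_integral_completion)
    finally show "diffLp_pow f p h = \<dots>" .
  qed
qed

lemma powr_tail_integral:
  assumes r: "0 < r" and n: "0 < n"
  shows "(\<integral>\<^sup>+t. indicator {r<..} t * ennreal (t powr (- real n - 1)) \<partial>lborel) = ennreal (1 / (real n * r ^ n))"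
proof -
  have hi: "((\<lambda>x. x powr (- real n - 1)) has_integral -(r powr ((- real n - 1)+1)) / ((- real n - 1)+1)) {r..}"
    by (rule has_integral_powr_to_inf) (use r n in auto)
  have val: "-(r powr ((- real n - 1)+1)) / ((- real n - 1)+1) = 1 / (real n * r ^ n)"
    using r n by (simp add: powr_minus powr_realpow field_simps)
  have hi2: "((\<lambda>x. indicator {r..} x * x powr (- real n - 1)) has_integral 1 / (real n * r ^ n)) UNIV"
  proof -
    have "(\<lambda>x. indicator {r..} x * x powr (- real n - 1)) = (\<lambda>x. if x \<in> {r..} then x powr (- real n - 1) else 0)"
      by (auto simp: indicator_def)
    then show ?thesis using hi unfolding val by (simp only: has_integral_restrict_UNIV)
  qed
  have "(\<integral>\<^sup>+t. ennreal (indicator {r..} t * t powr (- real n - 1)) \<partial>lborel) = ennreal (1 / (real n * r ^ n))"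
    by (rule nn_integral_has_integral_lborel[OF _ _ hi2]) (auto simp: indicator_def)
  moreover have "(\<integral>\<^sup>+t. indicator {r<..} t * ennreal (t powr (- real n - 1)) \<partial>lborel)
      = (\<integral>\<^sup>+t. ennreal (indicator {r..} t * t powr (- real n - 1)) \<partial>lborel)"
    by (rule nn_integral_cong_AE) (use AE_lborel_singleton[of r] in \<open>eventually_elim, auto simp: indicator_def\<close>)
  ultimately show ?thesis by simp
qed

lemma key_identity:
  fixes H :: "'a::euclidean_space \<Rightarrow> ennreal"
  assumes H[measurable]: "H \<in> borel_measurable borel"
  shows "(\<integral>\<^sup>+\<xi>\<in>ball 0 1. (\<integral>\<^sup>+t\<in>{0<..}. H (t *\<^sub>R \<xi>) * ennreal (1 / t) \<partial>lborel) \<partial>lborel)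
       = (\<integral>\<^sup>+h. ennreal (1 / (real DIM('a) * norm h ^ DIM('a))) * H h \<partial>lborel)"
proof -
  define n where "n = DIM('a)"
  have n: "0 < n" by (simp add: n_def)
  have "(\<integral>\<^sup>+\<xi>\<in>ball 0 1. (\<integral>\<^sup>+t\<in>{0<..}. H (t *\<^sub>R \<xi>) * ennreal (1 / t) \<partial>lborel) \<partial>lborel)
     = (\<integral>\<^sup>+\<xi>. (\<integral>\<^sup>+t. H (t *\<^sub>R \<xi>) * ennreal (1 / t) * indicator {0<..} t * indicator (ball 0 1) \<xi> \<partial>lborel) \<partial>lborel)"
    by (rule nn_integral_cong, subst nn_integral_multc) auto
  also have "\<dots> = (\<integral>\<^sup>+t. (\<integral>\<^sup>+\<xi>. H (t *\<^sub>R \<xi>) * ennreal (1 / t) * indicator {0<..} t * indicator (ball 0 1) \<xi> \<partial>lborel) \<partial>lborel)"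
    by (rule lborel_pair.Fubini'[symmetric]) measurable
  also have "\<dots> = (\<integral>\<^sup>+t. (\<integral>\<^sup>+h. H h * indicator {0<..} t * ennreal (1 / t ^ Suc n) * indicator {norm h<..} t \<partial>lborel) \<partial>lborel)"
  proof (rule nn_integral_cong)
    fix t :: real
    show "(\<integral>\<^sup>+\<xi>. H (t *\<^sub>R \<xi>) * ennreal (1 / t) * indicator {0<..} t * indicator (ball 0 1) \<xi> \<partial>lborel)
        = (\<integral>\<^sup>+h. H h * indicator {0<..} t * ennreal (1 / t ^ Suc n) * indicator {norm h<..} t \<partial>lborel)"
    proof (cases "0 < t")
      case False then show ?thesis by simp
    next
      case True
      define F where "F h = H h * indicator {norm h<..} t" for h :: 'a
      have F[measurable]: "F \<in> borel_measurable borel" unfolding F_def by measurable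
      have FF: "F (t *\<^sub>R x) = H (t *\<^sub>R x) * indicator (ball 0 1) x" for x
        using True by (simp add: F_def indicator_def abs_mult)
      have aff: "(\<integral>\<^sup>+h. F h \<partial>lborel) = ennreal (t ^ n) * (\<integral>\<^sup>+x. H (t *\<^sub>R x) * indicator (ball 0 1) x \<partial>lborel)"
        using nn_integral_affine_euclid[OF F, of t 0] True by (simp add: FF n_def)
      have "(\<integral>\<^sup>+\<xi>. H (t *\<^sub>R \<xi>) * ennreal (1 / t) * indicator {0<..} t * indicator (ball 0 1) \<xi> \<partial>lborel)
          = ennreal (1 / t) * (\<integral>\<^sup>+x. H (t *\<^sub>R x) * indicator (ball 0 1) x \<partial>lborel)"
        using True by (subst nn_integral_cmult[symmetric]) (auto intro!: nn_integral_cong simp: ac_simps)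
      also have "\<dots> = ennreal (1 / t) * ennreal (1 / t ^ n) * (ennreal (t ^ n) * (\<integral>\<^sup>+x. H (t *\<^sub>R x) * indicator (ball 0 1) x \<partial>lborel))"
        using True by (simp add: ennreal_mult[symmetric] mult.assoc[symmetric])
      also have "\<dots> = ennreal (1 / t ^ Suc n) * (\<integral>\<^sup>+h. F h \<partial>lborel)"
        using True by (simp add: aff ennreal_mult[symmetric])
      also have "\<dots> = (\<integral>\<^sup>+h. H h * indicator {0<..} t * ennreal (1 / t ^ Suc n) * indicator {norm h<..} t \<partial>lborel)"
        using True by (subst nn_integral_cmult[symmetric]) (auto intro!: nn_integral_cong simp: F_def ac_simps)
      finally show ?thesis .
    qed
  qed
  also have "\<dots> = (\<integral>\<^sup>+h. (\<integral>\<^sup>+t. H h * indicator {0<..} t * ennreal (1 / t ^ Suc n) * indicator {norm h<..} t \<partial>lborel) \<partial>lborel)"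
    by (rule lborel_pair.Fubini') measurable
  also have "\<dots> = (\<integral>\<^sup>+h. ennreal (1 / (real n * norm h ^ n)) * H h \<partial>lborel)"
  proof (rule nn_integral_cong_AE)
    show "AE h in lborel. (\<integral>\<^sup>+t. H h * indicator {0<..} t * ennreal (1 / t ^ Suc n) * indicator {norm h<..} t \<partial>lborel)
        = ennreal (1 / (real n * norm h ^ n)) * H h"
      using AE_lborel_singleton[of 0]
    proof eventually_elim
      case (elim h)
      then have hp: "0 < norm h" by simp
      have "(\<integral>\<^sup>+t. H h * indicator {0<..} t * ennreal (1 / t ^ Suc n) * indicator {norm h<..} t \<partial>lborel)
          = H h * (\<integral>\<^sup>+t. indicator {norm h<..} t * ennreal (t powr (- real n - 1)) \<partial>lborel)"
      proof (subst nn_integral_cmult[symmetric])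
        show "(\<integral>\<^sup>+t. H h * indicator {0<..} t * ennreal (1 / t ^ Suc n) * indicator {norm h<..} t \<partial>lborel)
            = (\<integral>\<^sup>+t. H h * (indicator {norm h<..} t * ennreal (t powr (- real n - 1))) \<partial>lborel)"
        proof (rule nn_integral_cong)
          fix t :: real
          show "H h * indicator {0<..} t * ennreal (1 / t ^ Suc n) * indicator {norm h<..} t
              = H h * (indicator {norm h<..} t * ennreal (t powr (- real n - 1)))"
          proof (cases "norm h < t")
            case True
            then have tp: "0 < t" using hp by linarith
            have "t powr (- real n - 1) = 1 / t ^ Suc n"
              using tp by (simp add: powr_diff powr_minus powr_realpow divide_inverse)
            then show ?thesis using True tp by (simp add: indicator_def)
          qed (simp add: indicator_def)
        qed
      qed simp
      also have "\<dots> = ennreal (1 / (real n * norm h ^ n)) * H h"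
        using powr_tail_integral[OF hp n] by (simp add: mult.commute)
      finally show ?case .
    qed
  qed
  finally show ?thesis by (simp add: n_def)
qed


lemma powr_sum_le:
  fixes a b p :: real
  assumes a: "0 \<le> a" and b: "0 \<le> b" and p: "1 \<le> p"
  shows "(a + b) powr p \<le> 2 powr (p - 1) * (a powr p + b powr p)"
proof (cases "a = 0 \<or> b = 0")
  case True
  have "1 \<le> 2 powr (p - 1)" using p by (simp add: ge_one_powr_ge_zero)
  then show ?thesis using True a b
    by (auto intro: order_trans[OF _ mult_right_mono[of 1]])
next
  case False
  then have a0: "0 < a" and b0: "0 < b" using a b by auto
  have cv: "\<forall>x\<in>{0<..}. \<forall>y\<in>{0<..}. \<forall>u\<ge>0. \<forall>v\<ge>0. u + v = 1 \<longrightarrow> (u * x + v * y) powr p \<le> u * x powr p + v * y powr p"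
    using powr_convex[OF p] unfolding convex_on_def by simp
  have "((1/2) * a + (1/2) * b) powr p \<le> (1/2) * a powr p + (1/2) * b powr p"
    using cv[rule_format, of a b "1/2" "1/2"] a0 b0 by simp
  then have "((a + b) / 2) powr p \<le> (a powr p + b powr p) / 2" by (simp add: field_simps)
  moreover have "((a + b) / 2) powr p = (a + b) powr p / 2 powr p" using a b by (simp add: powr_divide)
  ultimately have "(a + b) powr p \<le> 2 powr p * ((a powr p + b powr p) / 2)"
    by (simp add: divide_le_eq mult.commute)
  also have "2 powr p * ((a powr p + b powr p) / 2) = 2 powr (p - 1) * (a powr p + b powr p)"
    by (simp add: powr_diff)
  finally show ?thesis .
qed

lemma D_triangle:
  fixes g :: "'a::euclidean_space \<Rightarrow> real"
  assumes g[measurable]: "g \<in> borel_measurable borel" and p: "1 \<le> p"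
  defines "D \<equiv> \<lambda>h. \<integral>\<^sup>+x. ennreal (\<bar>g (x + h) - g x\<bar> powr p) \<partial>lborel"
  shows "D h \<le> ennreal (2 powr (p - 1)) * (D k + D (h - k))"
proof -
  have pt: "ennreal (\<bar>g (x + h) - g x\<bar> powr p) \<le> ennreal (2 powr (p - 1)) * (ennreal (\<bar>g (x + k) - g x\<bar> powr p) + ennreal (\<bar>g (x + h) - g (x + k)\<bar> powr p))" for x
  proof -
    have "\<bar>g (x + h) - g x\<bar> powr p \<le> (\<bar>g (x + k) - g x\<bar> + \<bar>g (x + h) - g (x + k)\<bar>) powr p"
      using p by (intro powr_mono2) auto
    also have "\<dots> \<le> 2 powr (p - 1) * (\<bar>g (x + k) - g x\<bar> powr p + \<bar>g (x + h) - g (x + k)\<bar> powr p)"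
      by (rule powr_sum_le) (use p in auto)
    finally show ?thesis by (simp add: ennreal_mult[symmetric] ennreal_plus[symmetric] del: ennreal_plus)
  qed
  have tr: "(\<integral>\<^sup>+x. ennreal (\<bar>g (x + h) - g (x + k)\<bar> powr p) \<partial>lborel) = D (h - k)"
  proof -
    have "(\<integral>\<^sup>+x. ennreal (\<bar>g ((x + k) + (h - k)) - g (x + k)\<bar> powr p) \<partial>lborel) = D (h - k)"
      unfolding D_def by (rule nn_integral_translate) measurable
    then show ?thesis by (simp add: algebra_simps)
  qed
  have "D h \<le> (\<integral>\<^sup>+x. ennreal (2 powr (p - 1)) * (ennreal (\<bar>g (x + k) - g x\<bar> powr p) + ennreal (\<bar>g (x + h) - g (x + k)\<bar> powr p)) \<partial>lborel)"
    unfolding D_def by (rule nn_integral_mono) (rule pt)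
  also have "\<dots> = ennreal (2 powr (p - 1)) * (D k + D (h - k))"
    by (subst nn_integral_cmult, measurable, subst nn_integral_add, measurable) (simp add: D_def tr)
  finally show ?thesis .
qed


lemma omega_pos: "0 < omega_n TYPE('a::euclidean_space)"
  unfolding omega_n_def using content_ball_pos[of 1 "0::'a"] by simp

lemma emeasure_ball_omega:
  assumes "0 \<le> r"
  shows "emeasure lborel (ball (0::'a::euclidean_space) r) = ennreal (r ^ DIM('a) * omega_n TYPE('a))"
proof -
  have "emeasure lborel (ball (0::'a) r) = ennreal (r ^ DIM('a)) * emeasure lborel (ball (0 :: 'a) 1)"
    using emeasure_lebesgue_ball_conv_unit_ball[OF assms, of "0::'a"] by simp
  also have "emeasure lborel (ball (0 :: 'a) 1) = ennreal (omega_n TYPE('a))"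
    unfolding omega_n_def using emeasure_lborel_ball_finite[of "0::'a" 1]
    by (simp add: emeasure_eq_ennreal_measure)
  finally show ?thesis using assms omega_pos[where 'a='a] by (simp add: ennreal_mult)
qed

lemma D_ball_bound:
  fixes g :: "'a::euclidean_space \<Rightarrow> real"
  assumes g[measurable]: "g \<in> borel_measurable borel" and p: "1 \<le> p" and h: "h \<noteq> 0"
  defines "D \<equiv> \<lambda>h. \<integral>\<^sup>+x. ennreal (\<bar>g (x + h) - g x\<bar> powr p) \<partial>lborel"
  shows "D h \<le> ennreal (2 powr p * 2 ^ DIM('a)) * (ennreal (1 / ((2 * norm h) ^ DIM('a) * omega_n TYPE('a))) * (\<integral>\<^sup>+k\<in>ball 0 (2 * norm h). D k \<partial>lborel))"
proof -
  define r where "r = norm h"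
  have r: "0 < r" using h by (simp add: r_def)
  define n where "n = DIM('a)"
  define \<omega> where "\<omega> = omega_n TYPE('a)"
  have \<omega>: "0 < \<omega>" unfolding \<omega>_def by (rule omega_pos)
  have Dm[measurable]: "D \<in> borel_measurable borel" unfolding D_def by measurable
  define Y where "Y = (\<integral>\<^sup>+k\<in>ball 0 (2 * r). D k \<partial>lborel)"
  have "ennreal (r ^ n * \<omega>) * D h = (\<integral>\<^sup>+k\<in>ball (0::'a) r. D h \<partial>lborel)"
    using emeasure_ball_omega[of r, where 'a='a] r by (simp add: nn_integral_cmult_indicator n_def \<omega>_def mult.commute)
  also have "\<dots> \<le> (\<integral>\<^sup>+k\<in>ball (0::'a) r. ennreal (2 powr (p - 1)) * (D k + D (h - k)) \<partial>lborel)"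
    by (intro nn_integral_mono mult_right_mono) (auto simp: D_def intro!: D_triangle[OF g p, simplified])
  also have "\<dots> = (\<integral>\<^sup>+k. ennreal (2 powr (p - 1)) * (D k * indicator (ball 0 r) k + D (h - k) * indicator (ball 0 r) k) \<partial>lborel)"
    by (intro nn_integral_cong) (simp add: distrib_left distrib_right mult_ac)
  also have "\<dots> = ennreal (2 powr (p - 1)) * (\<integral>\<^sup>+k. D k * indicator (ball 0 r) k + D (h - k) * indicator (ball 0 r) k \<partial>lborel)"
    by (rule nn_integral_cmult) measurable
  also have "\<dots> = ennreal (2 powr (p - 1)) * ((\<integral>\<^sup>+k\<in>ball 0 r. D k \<partial>lborel) + (\<integral>\<^sup>+k. D (h - k) * indicator (ball 0 r) k \<partial>lborel))"
    by (subst nn_integral_add) auto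
  also have "\<dots> \<le> ennreal (2 powr (p - 1)) * (Y + Y)"
  proof (intro mult_left_mono add_mono)
    show "(\<integral>\<^sup>+k\<in>ball 0 r. D k \<partial>lborel) \<le> Y" unfolding Y_def
      using r by (intro nn_integral_mono) (auto simp: indicator_def intro!: mult_left_mono)
    define F where "F x = D x * indicator (ball 0 r) (h - x)" for x
    have Fm[measurable]: "F \<in> borel_measurable borel" unfolding F_def by measurable
    have "(\<integral>\<^sup>+x. F x \<partial>lborel) = ennreal (\<bar>-1\<bar> ^ DIM('a)) * (\<integral>\<^sup>+x. F (h + (-1) *\<^sub>R x) \<partial>lborel)"
      by (rule nn_integral_affine_euclid[OF Fm]) simp
    then have "(\<integral>\<^sup>+k. D (h - k) * indicator (ball 0 r) k \<partial>lborel) = (\<integral>\<^sup>+x. F x \<partial>lborel)"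
      by (simp add: F_def)
    also have "\<dots> \<le> Y" unfolding Y_def F_def
    proof (intro nn_integral_mono)
      fix x :: 'a
      have "norm x < 2 * r" if "norm (h - x) < r"
        using that norm_triangle_ineq4[of h "h - x"] unfolding r_def by (simp add: norm_minus_commute)
      then show "D x * indicator (ball 0 r) (h - x) \<le> D x * indicator (ball 0 (2 * r)) x"
        by (auto simp: indicator_def dist_norm norm_minus_commute)
    qed
    finally show "(\<integral>\<^sup>+k. D (h - k) * indicator (ball 0 r) k \<partial>lborel) \<le> Y" .
  qed simp_all
  also have "\<dots> = ennreal (2 powr p) * Y"
  proof -
    have "ennreal (2 powr (p - 1)) * (Y + Y) = ennreal (2 powr (p - 1)) * ennreal 2 * Y"
      by (simp add: mult_2[symmetric] mult.assoc mult.commute[of 2])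
    also have "ennreal (2 powr (p - 1)) * ennreal 2 = ennreal (2 powr (p - 1) * 2)"
      by (rule ennreal_mult[symmetric]) auto
    also have "2 powr (p - 1) * 2 = (2::real) powr p" by (simp add: powr_diff)
    finally show ?thesis .
  qed
  finally have A: "ennreal (r ^ n * \<omega>) * D h \<le> ennreal (2 powr p) * Y" .
  have "D h = ennreal (1 / (r ^ n * \<omega>)) * (ennreal (r ^ n * \<omega>) * D h)"
    using r \<omega> by (simp add: mult.assoc[symmetric] ennreal_mult[symmetric])
  also have "\<dots> \<le> ennreal (1 / (r ^ n * \<omega>)) * (ennreal (2 powr p) * Y)"
    by (rule mult_left_mono[OF A]) simp
  also have "\<dots> = ennreal (2 powr p * 2 ^ n) * (ennreal (1 / ((2 * r) ^ n * \<omega>)) * Y)"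
  proof -
    have "1 / (r ^ n * \<omega>) * 2 powr p = 2 powr p * 2 ^ n * (1 / ((2 * r) ^ n * \<omega>))"
      using r \<omega> by (simp add: power_mult_distrib field_simps)
    then show ?thesis using r \<omega>
      by (simp add: mult.assoc[symmetric] ennreal_mult[symmetric])
  qed
  finally show ?thesis by (simp add: r_def n_def \<omega>_def Y_def)
qed


lemma radial_formula:
  fixes \<psi> :: "real \<Rightarrow> ennreal"
  assumes \<psi>[measurable]: "\<psi> \<in> borel_measurable borel"
  shows "(\<integral>\<^sup>+h. \<psi> (norm h) \<partial>(lborel::'a::euclidean_space measure))
       = ennreal (real DIM('a) * omega_n TYPE('a)) * (\<integral>\<^sup>+r\<in>{0<..}. ennreal (r ^ (DIM('a) - 1)) * \<psi> r \<partial>lborel)"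
proof -
  define n where "n = DIM('a)"
  have n: "0 < n" by (simp add: n_def)
  define \<omega> where "\<omega> = omega_n TYPE('a)"
  have \<omega>: "0 < \<omega>" unfolding \<omega>_def by (rule omega_pos)
  define J where "J = (\<integral>\<^sup>+r\<in>{0<..}. ennreal (r ^ (n - 1)) * \<psi> r \<partial>lborel)"
  define H where "H h = ennreal (norm h ^ n) * \<psi> (norm h)" for h :: 'a
  have Hm[measurable]: "H \<in> borel_measurable borel" unfolding H_def by measurable
  have key: "(\<integral>\<^sup>+\<xi>\<in>ball 0 1. (\<integral>\<^sup>+t\<in>{0<..}. H (t *\<^sub>R \<xi>) * ennreal (1 / t) \<partial>lborel) \<partial>lborel)
     = (\<integral>\<^sup>+h. ennreal (1 / (real DIM('a) * norm h ^ DIM('a))) * H h \<partial>lborel)"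
    by (rule key_identity[OF Hm])
  have R: "(\<integral>\<^sup>+h. ennreal (1 / (real DIM('a) * norm h ^ DIM('a))) * H h \<partial>lborel)
      = (\<integral>\<^sup>+h. ennreal (1 / real n) * \<psi> (norm (h::'a)) \<partial>lborel)"
  proof (rule nn_integral_cong_AE)
    show "AE h in lborel. ennreal (1 / (real DIM('a) * norm h ^ DIM('a))) * H h = ennreal (1 / real n) * \<psi> (norm (h::'a))"
      using AE_lborel_singleton[of 0]
    proof eventually_elim
      case (elim h)
      then have "0 < norm h" by simp
      then have "ennreal (1 / (real DIM('a) * norm h ^ DIM('a))) * ennreal (norm h ^ n) = ennreal (1 / real n)"
        using n by (simp add: ennreal_mult[symmetric] n_def)
      then show ?case unfolding H_def by (metis mult.assoc)
    qed
  qed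
  have L: "(\<integral>\<^sup>+\<xi>\<in>ball 0 1. (\<integral>\<^sup>+t\<in>{0<..}. H (t *\<^sub>R \<xi>) * ennreal (1 / t) \<partial>lborel) \<partial>lborel)
      = (\<integral>\<^sup>+\<xi>. J * indicator (ball (0::'a) 1) \<xi> \<partial>lborel)"
  proof (rule nn_integral_cong_AE)
    show "AE \<xi> in lborel. (\<integral>\<^sup>+t\<in>{0<..}. H (t *\<^sub>R \<xi>) * ennreal (1 / t) \<partial>lborel) * indicator (ball 0 1) \<xi> = J * indicator (ball 0 1) \<xi>"
      using AE_lborel_singleton[of 0]
    proof eventually_elim
      case (elim \<xi>)
      define \<rho> where "\<rho> = norm \<xi>"
      have \<rho>: "0 < \<rho>" using elim by (simp add: \<rho>_def)
      define F where "F r = ennreal (r ^ (n - 1)) * \<psi> r * indicator {0<..} r" for r :: real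
      have Fm[measurable]: "F \<in> borel_measurable borel" unfolding F_def by measurable
      have "(\<integral>\<^sup>+t\<in>{0<..}. H (t *\<^sub>R \<xi>) * ennreal (1 / t) \<partial>lborel) = (\<integral>\<^sup>+t. ennreal \<rho> * F (0 + \<rho> * t) \<partial>lborel)"
      proof (rule nn_integral_cong)
        fix t :: real
        show "H (t *\<^sub>R \<xi>) * ennreal (1 / t) * indicator {0<..} t = ennreal \<rho> * F (0 + \<rho> * t)"
        proof (cases "0 < t")
          case True
          have "t ^ n = t * t ^ (n - 1)" using n by (cases n) auto
          moreover have "\<rho> ^ n = \<rho> * \<rho> ^ (n - 1)" using n by (cases n) auto
          ultimately have e: "(t * \<rho>) ^ n * (1 / t) = \<rho> * (\<rho> * t) ^ (n - 1)"
            using True by (simp add: power_mult_distrib)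
          have "ennreal ((t * \<rho>) ^ n) * ennreal (1 / t) = ennreal ((t * \<rho>) ^ n * (1 / t))"
            by (rule ennreal_mult[symmetric]) (use True \<rho> in auto)
          also have "\<dots> = ennreal (\<rho> * (\<rho> * t) ^ (n - 1))" by (simp only: e)
          also have "\<dots> = ennreal \<rho> * ennreal ((\<rho> * t) ^ (n - 1))"
            by (rule ennreal_mult) (use True \<rho> in auto)
          finally have eq2: "ennreal ((t * \<rho>) ^ n) * ennreal (1 / t) = ennreal \<rho> * ennreal ((\<rho> * t) ^ (n - 1))" .
          have "H (t *\<^sub>R \<xi>) * ennreal (1 / t) * indicator {0<..} t = \<psi> (\<rho> * t) * (ennreal ((t * \<rho>) ^ n) * ennreal (1 / t))"
            using True by (simp add: H_def \<rho>_def mult.commute mult.left_commute)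
          also have "\<dots> = \<psi> (\<rho> * t) * (ennreal \<rho> * ennreal ((\<rho> * t) ^ (n - 1)))" by (simp only: eq2)
          also have "\<dots> = ennreal \<rho> * F (0 + \<rho> * t)" using True \<rho> by (simp add: F_def mult_ac)
          finally show ?thesis .
        qed (use \<rho> in \<open>simp add: F_def indicator_def zero_less_mult_iff\<close>)
      qed
      also have "\<dots> = ennreal \<rho> * (\<integral>\<^sup>+t. F (0 + \<rho> * t) \<partial>lborel)"
        by (rule nn_integral_cmult) measurable
      also have "\<dots> = (\<integral>\<^sup>+r. F r \<partial>lborel)"
        using nn_integral_real_affine[OF Fm, of \<rho> 0] \<rho> by simp
      also have "\<dots> = J" by (simp add: F_def J_def)
      finally show ?case by simp
    qed
  qed
  have "ennreal (1 / real n) * (\<integral>\<^sup>+h. \<psi> (norm h) \<partial>(lborel::'a measure)) = J * ennreal \<omega>"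
    using key L R emeasure_ball_omega[of 1, where 'a='a]
    by (simp add: nn_integral_cmult nn_integral_cmult_indicator \<omega>_def)
  note X = this
  have nn: "ennreal (real n) * ennreal (1 / real n) = 1"
    using n by (simp add: ennreal_mult[symmetric])
  have "(\<integral>\<^sup>+h. \<psi> (norm h) \<partial>(lborel::'a measure)) = (ennreal (real n) * ennreal (1 / real n)) * (\<integral>\<^sup>+h. \<psi> (norm h) \<partial>(lborel::'a measure))"
    by (simp only: nn mult_1)
  also have "\<dots> = ennreal (real n) * (J * ennreal \<omega>)" by (simp only: mult.assoc X)
  also have "ennreal (real n * \<omega>) = ennreal (real n) * ennreal \<omega>" by (rule ennreal_mult') simp
  then have "ennreal (real n) * (J * ennreal \<omega>) = ennreal (real n * \<omega>) * J" by (simp only: mult_ac)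
  finally have "(\<integral>\<^sup>+h. \<psi> (norm h) \<partial>(lborel::'a measure)) = ennreal (real n * \<omega>) * J" .
  then show ?thesis by (simp only: J_def n_def \<omega>_def)
qed


lemma part2_abstract:
  fixes g :: "'a::euclidean_space \<Rightarrow> real" and p q \<sigma> :: real
  assumes g[measurable]: "g \<in> borel_measurable borel" and p: "1 \<le> p" and q: "1 \<le> q" and \<sigma>: "0 < \<sigma>"
  defines "D \<equiv> \<lambda>h. \<integral>\<^sup>+x. ennreal (\<bar>g (x + h) - g x\<bar> powr p) \<partial>lborel"
  defines "Mo \<equiv> \<lambda>t. ennreal (1 / (t ^ DIM('a) * omega_n TYPE('a))) * (\<integral>\<^sup>+h\<in>ball 0 t. D h \<partial>lborel)"
  shows "(\<integral>\<^sup>+h. epow (ennreal (norm h)) (-\<sigma>) * epow (D h) (q/p) * epow (ennreal (norm h)) (- real DIM('a)) \<partial>lborel)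
     \<le> ennreal (real DIM('a) * omega_n TYPE('a)) * ennreal ((2 powr p * 2 ^ DIM('a)) powr (q/p)) * ennreal (2 powr \<sigma>)
        * (\<integral>\<^sup>+t\<in>{0<..}. epow (ennreal t) (-\<sigma>) * epow (Mo t) (q/p) * ennreal (1/t) \<partial>lborel)"
proof -
  define n where "n = DIM('a)"
  have n: "0 < n" by (simp add: n_def)
  define c where "c = (2 powr p * 2 ^ DIM('a)) powr (q/p)"
  have c: "0 < c" by (simp add: c_def)
  have qp: "0 < q / p" using p q by simp
  have Dm[measurable]: "D \<in> borel_measurable borel" unfolding D_def by measurable
  have Mom[measurable]: "Mo \<in> borel_measurable borel" unfolding Mo_def by measurable
  define X where "X u = epow (Mo u) (q/p)" for u
  have Xm[measurable]: "X \<in> borel_measurable borel" unfolding X_def by measurable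
  define \<psi> where "\<psi> r = ennreal c * (ennreal (r powr (-\<sigma> - real n)) * X (2 * r) * indicator {0<..} r)" for r :: real
  have \<psi>m[measurable]: "\<psi> \<in> borel_measurable borel" unfolding \<psi>_def by measurable
  have S1: "(\<integral>\<^sup>+h. epow (ennreal (norm h)) (-\<sigma>) * epow (D h) (q/p) * epow (ennreal (norm h)) (- real DIM('a)) \<partial>lborel)
      \<le> (\<integral>\<^sup>+h. \<psi> (norm h) \<partial>(lborel::'a measure))"
  proof (rule nn_integral_mono_AE)
    show "AE h in lborel. epow (ennreal (norm h)) (-\<sigma>) * epow (D h) (q/p) * epow (ennreal (norm h)) (- real DIM('a)) \<le> \<psi> (norm h)"
      using AE_lborel_singleton[of 0]
    proof eventually_elim
      case (elim h)
      then have \<rho>: "0 < norm h" by simp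
      have "epow (D h) (q/p) \<le> epow (ennreal (2 powr p * 2 ^ DIM('a)) * Mo (2 * norm h)) (q/p)"
        unfolding Mo_def D_def
        by (rule epow_mono[OF qp], rule D_ball_bound[OF g p elim[simplified]])
      also have "\<dots> = ennreal c * X (2 * norm h)"
        by (simp add: epow_mult_const c_def X_def)
      finally have le: "epow (D h) (q/p) \<le> ennreal c * X (2 * norm h)" .
      have "epow (ennreal (norm h)) (-\<sigma>) * epow (D h) (q/p) * epow (ennreal (norm h)) (- real DIM('a))
          = epow (D h) (q/p) * ennreal (norm h powr (-\<sigma> - real n))"
        using \<rho> by (simp add: epow_ennreal ennreal_mult[symmetric] powr_add[symmetric] n_def mult_ac)
      also have "\<dots> \<le> ennreal c * X (2 * norm h) * ennreal (norm h powr (-\<sigma> - real n))"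
        by (rule mult_right_mono[OF le]) simp
      also have "\<dots> = \<psi> (norm h)" using \<rho> by (simp add: \<psi>_def mult_ac)
      finally show ?case .
    qed
  qed
  have S2: "(\<integral>\<^sup>+h. \<psi> (norm h) \<partial>(lborel::'a measure)) = ennreal (real n * omega_n TYPE('a)) * (\<integral>\<^sup>+r\<in>{0<..}. ennreal (r ^ (n - 1)) * \<psi> r \<partial>lborel)"
    using radial_formula[OF \<psi>m, where 'a='a] by (simp add: n_def)
  define F where "F u = ennreal (u powr (-\<sigma> - 1)) * X u * indicator {0<..} u" for u :: real
  have Fm[measurable]: "F \<in> borel_measurable borel" unfolding F_def by measurable
  have S3: "(\<integral>\<^sup>+r\<in>{0<..}. ennreal (r ^ (n - 1)) * \<psi> r \<partial>lborel) = ennreal c * (\<integral>\<^sup>+r. ennreal (r powr (-\<sigma> - 1)) * X (2 * r) * indicator {0<..} r \<partial>lborel)"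
  proof -
    have "(\<integral>\<^sup>+r\<in>{0<..}. ennreal (r ^ (n - 1)) * \<psi> r \<partial>lborel) = (\<integral>\<^sup>+r. ennreal c * (ennreal (r powr (-\<sigma> - 1)) * X (2 * r) * indicator {0<..} r) \<partial>lborel)"
    proof (rule nn_integral_cong)
      fix r :: real
      show "ennreal (r ^ (n - 1)) * \<psi> r * indicator {0<..} r = ennreal c * (ennreal (r powr (-\<sigma> - 1)) * X (2 * r) * indicator {0<..} r)"
      proof (cases "0 < r")
        case True
        have "r ^ (n - 1) * r powr (-\<sigma> - real n) = r powr (-\<sigma> - 1)"
          using True n by (simp add: powr_realpow[symmetric] powr_add[symmetric] of_nat_diff) (rule arg_cong[where f="(powr) r"], simp)
        then have "ennreal (r ^ (n - 1)) * ennreal (r powr (-\<sigma> - real n)) = ennreal (r powr (-\<sigma> - 1))"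
          using True by (simp add: ennreal_mult[symmetric])
        then show ?thesis using True unfolding \<psi>_def
          by (simp add: mult.assoc[symmetric]) (simp add: mult_ac)
      qed (simp add: \<psi>_def)
    qed
    also have "\<dots> = ennreal c * (\<integral>\<^sup>+r. ennreal (r powr (-\<sigma> - 1)) * X (2 * r) * indicator {0<..} r \<partial>lborel)"
      by (rule nn_integral_cmult) measurable
    finally show ?thesis .
  qed
  have S4: "(\<integral>\<^sup>+r. ennreal (r powr (-\<sigma> - 1)) * X (2 * r) * indicator {0<..} r \<partial>lborel) = ennreal (2 powr \<sigma>) * (\<integral>\<^sup>+u. F u \<partial>lborel)"
  proof -
    have FF: "F (0 + 2 * r) = ennreal (2 powr (-\<sigma> - 1)) * (ennreal (r powr (-\<sigma> - 1)) * X (2 * r) * indicator {0<..} r)" for r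
      by (cases "0 < r") (simp_all add: F_def powr_mult ennreal_mult[symmetric] indicator_def mult_ac)
    have "(\<integral>\<^sup>+u. F u \<partial>lborel) = ennreal 2 * (\<integral>\<^sup>+r. F (0 + 2 * r) \<partial>lborel)"
      using nn_integral_real_affine[OF Fm, of 2 0] by simp
    also have "\<dots> = ennreal 2 * (ennreal (2 powr (-\<sigma> - 1)) * (\<integral>\<^sup>+r. ennreal (r powr (-\<sigma> - 1)) * X (2 * r) * indicator {0<..} r \<partial>lborel))"
      unfolding FF by (subst nn_integral_cmult) auto
    also have "\<dots> = ennreal (2 powr (-\<sigma>)) * (\<integral>\<^sup>+r. ennreal (r powr (-\<sigma> - 1)) * X (2 * r) * indicator {0<..} r \<partial>lborel)"
    proof -
      have "ennreal 2 * ennreal (2 powr (-\<sigma> - 1)) = ennreal (2 * 2 powr (-\<sigma> - 1))" by (rule ennreal_mult[symmetric]) auto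
      also have "2 * 2 powr (-\<sigma> - 1) = (2::real) powr (-\<sigma>)" by (simp add: powr_diff)
      finally show ?thesis by (simp only: mult.assoc[symmetric])
    qed
    finally have "(\<integral>\<^sup>+u. F u \<partial>lborel) = ennreal (2 powr (-\<sigma>)) * (\<integral>\<^sup>+r. ennreal (r powr (-\<sigma> - 1)) * X (2 * r) * indicator {0<..} r \<partial>lborel)" .
    then have "ennreal (2 powr \<sigma>) * (\<integral>\<^sup>+u. F u \<partial>lborel) = (ennreal (2 powr \<sigma>) * ennreal (2 powr (-\<sigma>))) * (\<integral>\<^sup>+r. ennreal (r powr (-\<sigma> - 1)) * X (2 * r) * indicator {0<..} r \<partial>lborel)"
      by (simp only: mult.assoc)
    also have "ennreal (2 powr \<sigma>) * ennreal (2 powr (-\<sigma>)) = 1"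
      by (simp add: ennreal_mult[symmetric] powr_add[symmetric])
    finally show ?thesis by simp
  qed
  have S5: "(\<integral>\<^sup>+u. F u \<partial>lborel) = (\<integral>\<^sup>+t\<in>{0<..}. epow (ennreal t) (-\<sigma>) * epow (Mo t) (q/p) * ennreal (1/t) \<partial>lborel)"
  proof (rule nn_integral_cong)
    fix t :: real
    show "F t = epow (ennreal t) (-\<sigma>) * epow (Mo t) (q/p) * ennreal (1/t) * indicator {0<..} t"
    proof (cases "0 < t")
      case True
      have "ennreal (t powr (-\<sigma> - 1)) = ennreal (t powr (-\<sigma>)) * ennreal (1/t)"
        using True by (simp add: ennreal_mult[symmetric] powr_diff divide_inverse)
      then show ?thesis using True by (simp add: F_def X_def epow_ennreal mult_ac)
    qed (simp add: F_def)
  qed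
  have "(\<integral>\<^sup>+h. epow (ennreal (norm h)) (-\<sigma>) * epow (D h) (q/p) * epow (ennreal (norm h)) (- real DIM('a)) \<partial>lborel)
      \<le> ennreal (real n * omega_n TYPE('a)) * (ennreal c * (ennreal (2 powr \<sigma>) * (\<integral>\<^sup>+t\<in>{0<..}. epow (ennreal t) (-\<sigma>) * epow (Mo t) (q/p) * ennreal (1/t) \<partial>lborel)))"
    using S1 unfolding S2 S3 S4 S5 .
  then show ?thesis by (simp add: n_def c_def mult_ac)
qed

lemma tangent_ineq:
  fixes z r :: real
  assumes z: "0 < z" and r: "0 < r"
  shows "1 + r \<le> z powr (- r) + r * z"
proof -
  have "(z powr (-r)) powr (1/(1+r)) * z powr (r/(1+r)) \<le> (1/(1+r)) * z powr (-r) + (r/(1+r)) * z"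
    by (rule Youngs_inequality_0) (use z r in \<open>auto simp: field_simps\<close>)
  moreover have "(z powr (-r)) powr (1/(1+r)) * z powr (r/(1+r)) = 1"
    using z r by (simp add: powr_powr powr_add[symmetric])
  moreover have "(1/(1+r)) * z powr (-r) + (r/(1+r)) * z = (z powr (-r) + r * z) / (1 + r)"
    using r by (simp add: add_divide_distrib)
  ultimately have "1 \<le> (z powr (-r) + r * z) / (1 + r)"
    by simp
  then show ?thesis using r by (simp add: le_divide_eq)
qed

lemma tangent_ineq_ennreal:
  fixes m r :: real and x :: ennreal
  assumes m: "0 < m" and r: "0 < r"
  shows "ennreal ((1 + r) * m powr (- r)) \<le> epow x (- r) + ennreal (r * m powr (- r - 1)) * x"
proof (cases x rule: epow_cases)
  case 1 then show ?thesis using r by simp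
next
  case 2 then show ?thesis using r m by (simp add: ennreal_mult_top)
next
  case (3 y)
  define z where "z = y / m"
  have z: "0 < z" using 3 m by (simp add: z_def)
  have y: "y = m * z" using m by (simp add: z_def)
  have "(1 + r) * m powr (- r) \<le> (z powr (-r) + r * z) * m powr (- r)"
    using tangent_ineq[OF z r] by (rule mult_right_mono) simp
  also have "\<dots> = y powr (-r) + r * m powr (- r - 1) * y"
    using m z unfolding y by (simp add: powr_mult algebra_simps powr_diff powr_minus field_simps)
  finally show ?thesis using 3 r m
    by (simp add: epow_ennreal ennreal_mult[symmetric] ennreal_plus[symmetric] del: ennreal_plus)
qed

lemma power_mean_ennreal:
  fixes a :: "'b \<Rightarrow> ennreal"
  assumes a[measurable]: "a \<in> borel_measurable M" and V: "emeasure M (space M) = ennreal V" "0 < V"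
    and r: "0 < r"
  shows "ennreal (V powr (1 + 1/r)) * epow (\<integral>\<^sup>+x. epow (a x) (-r) \<partial>M) (-1/r) \<le> (\<integral>\<^sup>+x. a x \<partial>M)"
proof -
  define A where "A = (\<integral>\<^sup>+x. a x \<partial>M)"
  define J where "J = (\<integral>\<^sup>+x. epow (a x) (-r) \<partial>M)"
  have "ennreal (V powr (1 + 1/r)) * epow J (-1/r) \<le> A"
  proof (cases A rule: epow_cases)
    case 1
    then have "AE x in M. a x = 0" unfolding A_def by (simp add: nn_integral_0_iff_AE)
    then have "AE x in M. epow (a x) (-r) = \<infinity>"
      by eventually_elim (use r in simp)
    then have "J = (\<integral>\<^sup>+x. \<infinity> \<partial>M)" unfolding J_def
      by (rule nn_integral_cong_AE)
    also have "\<dots> = \<infinity>" using V by (simp add: ennreal_mult_top)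
    finally have "J = \<infinity>" .
    then show ?thesis using r by (simp add: epow_def)
  next
    case 2 then show ?thesis by simp
  next
    case (3 \<alpha>)
    define m where "m = \<alpha> / V"
    have m: "0 < m" using 3 V by (simp add: m_def)
    have \<alpha>: "\<alpha> = m * V" using V by (simp add: m_def)
    have "(\<integral>\<^sup>+x. ennreal ((1 + r) * m powr (- r)) \<partial>M) \<le> (\<integral>\<^sup>+x. epow (a x) (- r) + ennreal (r * m powr (- r - 1)) * a x \<partial>M)"
      by (intro nn_integral_mono tangent_ineq_ennreal m r)
    also have "\<dots> = J + ennreal (r * m powr (- r - 1)) * A"
      unfolding J_def A_def by (subst nn_integral_add) (auto simp: nn_integral_cmult)
    also have "ennreal (r * m powr (- r - 1)) * A = ennreal (r * m powr (- r) * V)"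
      using 3 m V r unfolding \<alpha> by (simp add: ennreal_mult[symmetric] powr_diff powr_minus field_simps)
    finally have "ennreal ((1 + r) * m powr (- r) * V) \<le> J + ennreal (r * m powr (- r) * V)"
      using V m r by (simp add: ennreal_mult[symmetric] mult.commute)
    also have "ennreal ((1 + r) * m powr (- r) * V) = ennreal (m powr (- r) * V) + ennreal (r * m powr (- r) * V)"
      using m V r by (simp add: ennreal_plus[symmetric] algebra_simps del: ennreal_plus)
    finally have "ennreal (r * m powr (- r) * V) + ennreal (m powr (- r) * V) \<le> ennreal (r * m powr (- r) * V) + J"
      by (metis add.commute)
    then have JJ: "ennreal (m powr (- r) * V) \<le> J"
      by (simp add: ennreal_add_left_cancel_le)
    have "epow J (-1/r) \<le> epow (ennreal (m powr (- r) * V)) (-1/r)"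
      by (rule epow_antimono) (use r JJ in auto)
    also have "\<dots> = ennreal (m * V powr (- 1 / r))"
      using m V r by (simp add: epow_ennreal powr_mult powr_powr)
    finally have "ennreal (V powr (1 + 1/r)) * epow J (-1/r) \<le> ennreal (V powr (1 + 1/r)) * ennreal (m * V powr (- 1 / r))"
      by (rule mult_left_mono) simp
    also have "\<dots> = A"
      using m V r 3 unfolding \<alpha> by (simp add: ennreal_mult[symmetric] powr_add[symmetric] mult.commute mult.left_commute)
    finally show ?thesis .
  qed
  then show ?thesis by (simp add: A_def J_def)
qed

lemma poly_integral_0_T:
  assumes T: "0 < T" and n: "0 < n"
  shows "(\<integral>\<^sup>+t. indicator {0<..T} t * ennreal (t ^ (n - 1)) \<partial>lborel) = ennreal (T ^ n / real n)"
proof -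
  have hi: "((\<lambda>x. x powr (real n - 1)) has_integral (T powr ((real n - 1)+1) / ((real n - 1)+1))) {0..T}"
    by (rule has_integral_powr_from_0) (use T n in auto)
  have val: "T powr ((real n - 1)+1) / ((real n - 1)+1) = T ^ n / real n"
    using T n by (simp add: powr_realpow)
  have hi2: "((\<lambda>x. indicator {0..T} x * x powr (real n - 1)) has_integral T ^ n / real n) UNIV"
  proof -
    have "(\<lambda>x. indicator {0..T} x * x powr (real n - 1)) = (\<lambda>x. if x \<in> {0..T} then x powr (real n - 1) else 0)"
      by (auto simp: indicator_def)
    then show ?thesis using hi unfolding val by (simp only: has_integral_restrict_UNIV)
  qed
  have "(\<integral>\<^sup>+t. ennreal (indicator {0..T} t * t powr (real n - 1)) \<partial>lborel) = ennreal (T ^ n / real n)"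
    by (rule nn_integral_has_integral_lborel[OF _ _ hi2]) (auto simp: indicator_def)
  moreover have "(\<integral>\<^sup>+t. indicator {0<..T} t * ennreal (t ^ (n - 1)) \<partial>lborel)
      = (\<integral>\<^sup>+t. ennreal (indicator {0..T} t * t powr (real n - 1)) \<partial>lborel)"
  proof (rule nn_integral_cong_AE)
    show "AE t in lborel. indicator {0<..T} t * ennreal (t ^ (n - 1)) = ennreal (indicator {0..T} t * t powr (real n - 1))"
      using AE_lborel_singleton[of 0]
    proof eventually_elim
      case (elim t)
      show ?case
      proof (cases "0 < t \<and> t \<le> T")
        case True
        then have "t powr (real n - 1) = t ^ (n - 1)" using n by (simp add: powr_realpow[symmetric] of_nat_diff)
        then show ?thesis using True by (simp add: indicator_def)
      qed (use elim in \<open>auto simp: indicator_def\<close>)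
    qed
  qed
  ultimately show ?thesis by simp
qed

lemma poly_integral_0_inf:
  assumes n: "0 < n"
  shows "(\<integral>\<^sup>+t. indicator {0<..} t * ennreal (t ^ (n - 1)) \<partial>lborel) = \<infinity>"
proof (rule ccontr)
  define X where "X = (\<integral>\<^sup>+t. indicator {0<..} t * ennreal (t ^ (n - 1)) \<partial>lborel)"
  assume "X \<noteq> \<infinity>"
  then obtain x where x: "X = ennreal x" "0 \<le> x" by (cases X) auto
  define T where "T = real n * (x + 1) + 1"
  have T0: "0 \<le> real n * (x + 1)" using x by simp
  have T: "1 \<le> T" "0 < T" using T0 by (auto simp: T_def)
  have "ennreal (T ^ n / real n) \<le> X"
    unfolding X_def poly_integral_0_T[OF T(2) n, symmetric]
    by (rule nn_integral_mono) (auto simp: indicator_def)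
  then have le: "T ^ n / real n \<le> x" using x by simp
  have "T \<le> T ^ n" using T n by (metis One_nat_def Suc_leI power_increasing power_one_right)
  then have "T / real n \<le> T ^ n / real n" using n by (simp add: divide_right_mono)
  moreover have "x < T / real n" using n x by (simp add: T_def field_simps)
  ultimately show False using le by linarith
qed

lemma Phi_homog:
  fixes E :: "'a::euclidean_space \<Rightarrow> ennreal"
  assumes E[measurable]: "E \<in> borel_measurable borel" and \<sigma>: "0 < \<sigma>" and l: "0 < l"
  shows "(\<integral>\<^sup>+t\<in>{0<..}. epow (ennreal t) (-\<sigma>) * E (t *\<^sub>R (l *\<^sub>R \<xi>)) * ennreal (1/t) \<partial>lborel)
       = ennreal (l powr \<sigma>) * (\<integral>\<^sup>+t\<in>{0<..}. epow (ennreal t) (-\<sigma>) * E (t *\<^sub>R \<xi>) * ennreal (1/t) \<partial>lborel)"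
proof -
  define F where "F u = epow (ennreal u) (-\<sigma>) * E (u *\<^sub>R \<xi>) * ennreal (1/u) * indicator {0<..} u" for u :: real
  have F[measurable]: "F \<in> borel_measurable borel" unfolding F_def by measurable
  have FF: "F (0 + l * x) = ennreal (l powr (-\<sigma>) / l) * (epow (ennreal x) (-\<sigma>) * E (x *\<^sub>R (l *\<^sub>R \<xi>)) * ennreal (1/x) * indicator {0<..} x)" for x
  proof (cases "0 < x")
    case True
    have e1: "epow (ennreal (l*x)) (-\<sigma>) = ennreal (l powr -\<sigma>) * ennreal (x powr -\<sigma>)"
      using True l by (simp add: epow_ennreal powr_mult ennreal_mult[symmetric])
    have e2: "ennreal (1/(l*x)) = ennreal (1/l) * ennreal (1/x)"
      using True l by (simp add: ennreal_mult[symmetric])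
    have e3: "ennreal (l powr -\<sigma> / l) = ennreal (l powr -\<sigma>) * ennreal (1/l)"
      using True l by (simp add: ennreal_mult[symmetric] divide_inverse)
    have "F (0 + l * x) = epow (ennreal (l*x)) (-\<sigma>) * E (x *\<^sub>R (l *\<^sub>R \<xi>)) * ennreal (1/(l*x))"
      using True l by (simp add: F_def indicator_def zero_less_mult_iff mult.commute)
    also have "\<dots> = ennreal (l powr (-\<sigma>) / l) * (epow (ennreal x) (-\<sigma>) * E (x *\<^sub>R (l *\<^sub>R \<xi>)) * ennreal (1/x))"
      unfolding e1 e2 e3 using True by (simp add: epow_ennreal mult_ac)
    finally show ?thesis using True by (simp add: indicator_def)
  qed (use l in \<open>simp add: F_def indicator_def zero_less_mult_iff\<close>)
  have "(\<integral>\<^sup>+u. F u \<partial>lborel) = ennreal l * (\<integral>\<^sup>+x. F (0 + l * x) \<partial>lborel)"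
    using nn_integral_real_affine[OF F, of l 0] l by simp
  also have "\<dots> = ennreal l * (ennreal (l powr (-\<sigma>) / l) * (\<integral>\<^sup>+x. epow (ennreal x) (-\<sigma>) * E (x *\<^sub>R (l *\<^sub>R \<xi>)) * ennreal (1/x) * indicator {0<..} x \<partial>lborel))"
    unfolding FF by (subst nn_integral_cmult) auto
  also have "\<dots> = ennreal (l powr (-\<sigma>)) * (\<integral>\<^sup>+x. epow (ennreal x) (-\<sigma>) * E (x *\<^sub>R (l *\<^sub>R \<xi>)) * ennreal (1/x) * indicator {0<..} x \<partial>lborel)"
    using l by (simp add: mult.assoc[symmetric] ennreal_mult[symmetric])
  finally have eq: "(\<integral>\<^sup>+u. F u \<partial>lborel) = \<dots>" .
  have "ennreal (l powr \<sigma>) * (\<integral>\<^sup>+u. F u \<partial>lborel) = ennreal (l powr \<sigma>) * ennreal (l powr (-\<sigma>)) * (\<integral>\<^sup>+x. epow (ennreal x) (-\<sigma>) * E (x *\<^sub>R (l *\<^sub>R \<xi>)) * ennreal (1/x) * indicator {0<..} x \<partial>lborel)"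
    unfolding eq by (simp add: mult.assoc)
  also have "ennreal (l powr \<sigma>) * ennreal (l powr (-\<sigma>)) = 1"
    using l by (simp add: ennreal_mult[symmetric] powr_add[symmetric])
  finally show ?thesis by (simp add: F_def)
qed


lemma powr_le_iff_pos:
  fixes t T \<sigma> :: real
  assumes "0 < t" "0 < T" "0 < \<sigma>"
  shows "t powr \<sigma> \<le> T powr \<sigma> \<longleftrightarrow> t \<le> T"
  using assms by (metis less_le_not_le nle_le powr_less_mono2 powr_mono2 less_imp_le)

lemma inner_K:
  fixes \<phi> :: ennreal and r \<sigma> :: real and n :: nat
  assumes r: "0 < r" and \<sigma>: "0 < \<sigma>" and n: "0 < n"
  shows "(\<integral>\<^sup>+t. ennreal (r ^ n) * (indicator {0<..} t * indicator {t. ennreal (t powr \<sigma>) * \<phi> \<le> 1} t * ennreal (t ^ (n - 1))) \<partial>lborel)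
       = ennreal (1 / real n) * epow (ennreal (r powr -\<sigma>) * \<phi>) (- (real n / \<sigma>))"
proof (cases \<phi> rule: epow_cases)
  case 1
  have "(\<integral>\<^sup>+t. ennreal (r ^ n) * (indicator {0<..} t * indicator {t. ennreal (t powr \<sigma>) * \<phi> \<le> 1} t * ennreal (t ^ (n - 1))) \<partial>lborel)
      = ennreal (r ^ n) * (\<integral>\<^sup>+t. indicator {0<..} t * ennreal (t ^ (n - 1)) \<partial>lborel)"
    using 1 by (subst nn_integral_cmult[symmetric]) (auto intro!: nn_integral_cong simp: indicator_def)
  also have "\<dots> = \<infinity>" using poly_integral_0_inf[OF n] r by (simp add: ennreal_mult_top)
  moreover have neg: "- (real n / \<sigma>) < 0" using n \<sigma> by simp
  ultimately show ?thesis using 1 \<sigma> n epow_0_neg[OF neg] by (simp add: ennreal_mult_top)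
next
  case 2
  have "(\<integral>\<^sup>+t. ennreal (r ^ n) * (indicator {0<..} t * indicator {t. ennreal (t powr \<sigma>) * \<phi> \<le> 1} t * ennreal (t ^ (n - 1))) \<partial>lborel)
      = (\<integral>\<^sup>+t. 0 \<partial>(lborel::real measure))"
    using 2 by (intro nn_integral_cong) (auto simp: indicator_def ennreal_mult_top top_unique)
  moreover have neg: "- (real n / \<sigma>) < 0" using n \<sigma> by simp
  ultimately show ?thesis using 2 \<sigma> n r epow_top_neg[OF neg] by (simp add: ennreal_mult_top)
next
  case (3 y)
  define T where "T = y powr (-1/\<sigma>)"
  have T: "0 < T" using 3 by (simp add: T_def)
  have Ts: "T powr \<sigma> = 1 / y"
  proof -
    have "T powr \<sigma> = y powr ((-1/\<sigma>) * \<sigma>)" unfolding T_def by (rule powr_powr)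
    also have "(-1/\<sigma>) * \<sigma> = -1" using \<sigma> by simp
    finally show ?thesis using 3 by (simp add: powr_minus divide_inverse)
  qed
  have iff: "ennreal (t powr \<sigma>) * \<phi> \<le> 1 \<longleftrightarrow> t \<le> T" if "0 < t" for t
  proof -
    have "ennreal (t powr \<sigma>) * \<phi> \<le> 1 \<longleftrightarrow> t powr \<sigma> * y \<le> 1"
      using 3 that by (simp add: ennreal_mult[symmetric])
    also have "\<dots> \<longleftrightarrow> t powr \<sigma> \<le> T powr \<sigma>" using 3 by (simp add: Ts field_simps)
    also have "\<dots> \<longleftrightarrow> t \<le> T" by (rule powr_le_iff_pos[OF that T \<sigma>])
    finally show ?thesis .
  qed
  have "(\<integral>\<^sup>+t. ennreal (r ^ n) * (indicator {0<..} t * indicator {t. ennreal (t powr \<sigma>) * \<phi> \<le> 1} t * ennreal (t ^ (n - 1))) \<partial>lborel)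
      = ennreal (r ^ n) * (\<integral>\<^sup>+t. indicator {0<..T} t * ennreal (t ^ (n - 1)) \<partial>lborel)"
    by (subst nn_integral_cmult[symmetric]) (auto intro!: nn_integral_cong simp: indicator_def iff)
  also have "\<dots> = ennreal (r ^ n * (T ^ n / real n))"
    using poly_integral_0_T[OF T n] r T by (simp add: ennreal_mult'[symmetric])
  also have "\<dots> = ennreal (1 / real n) * epow (ennreal (r powr -\<sigma>) * \<phi>) (- (real n / \<sigma>))"
  proof -
    have "T ^ n = y powr (- (real n / \<sigma>))"
      using 3 by (simp add: T_def powr_realpow[symmetric] powr_powr)
    moreover have "(r powr -\<sigma>) powr (- (real n / \<sigma>)) = r ^ n"
      using r \<sigma> by (simp add: powr_powr powr_realpow)
    ultimately show ?thesis using 3 r \<sigma> n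
      by (simp add: epow_mult_const epow_ennreal ennreal_mult[symmetric] powr_mult mult_ac)
  qed
  finally show ?thesis .
qed

lemma part1_abstract:
  fixes E :: "'a::euclidean_space \<Rightarrow> ennreal" and \<sigma> :: real
  assumes E[measurable]: "E \<in> borel_measurable borel" and \<sigma>: "0 < \<sigma>"
  defines "\<Phi> \<equiv> \<lambda>\<xi>. \<integral>\<^sup>+t\<in>{0<..}. epow (ennreal t) (-\<sigma>) * E (t *\<^sub>R \<xi>) * ennreal (1/t) \<partial>lborel"
  shows "ennreal (real DIM('a) * omega_n TYPE('a) powr ((real DIM('a) + \<sigma>) / real DIM('a)))
           * epow (emeasure lborel {\<xi>. \<Phi> \<xi> \<le> 1}) (- \<sigma> / real DIM('a))
         \<le> (\<integral>\<^sup>+ h. epow (ennreal (norm h)) (- \<sigma>) * E h * epow (ennreal (norm h)) (- real DIM('a)) \<partial>lborel)"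
proof -
  define n where "n = DIM('a)"
  have n: "0 < n" by (simp add: n_def)
  define B where "B = ball (0::'a) 1"
  have Bm[measurable]: "B \<in> sets borel" unfolding B_def by simp
  have \<Phi>m[measurable]: "\<Phi> \<in> borel_measurable borel" unfolding \<Phi>_def by measurable
  define K where "K = {\<xi>. \<Phi> \<xi> \<le> 1}"
  have Km[measurable]: "K \<in> sets borel" unfolding K_def by measurable
  define a where "a \<xi> = ennreal (norm \<xi> powr -\<sigma>) * \<Phi> \<xi>" for \<xi>
  have am[measurable]: "a \<in> borel_measurable borel" unfolding a_def by measurable
  have hom: "\<Phi> (l *\<^sub>R \<xi>) = ennreal (l powr \<sigma>) * \<Phi> \<xi>" if "0 < l" for l \<xi>
    unfolding \<Phi>_def using Phi_homog[of E \<sigma> l \<xi>] that \<sigma> by simp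
  have stepV: "emeasure lborel K = (\<integral>\<^sup>+\<xi>\<in>B. epow (a \<xi>) (- (real n / \<sigma>)) \<partial>lborel)"
  proof -
    define HK where "HK h = ennreal (norm h ^ n) * indicator K h" for h :: 'a
    have HKm[measurable]: "HK \<in> borel_measurable borel" unfolding HK_def by measurable
    have key: "(\<integral>\<^sup>+\<xi>\<in>ball 0 1. (\<integral>\<^sup>+t\<in>{0<..}. HK (t *\<^sub>R \<xi>) * ennreal (1 / t) \<partial>lborel) \<partial>lborel)
       = (\<integral>\<^sup>+h. ennreal (1 / (real DIM('a) * norm h ^ DIM('a))) * HK h \<partial>lborel)"
      by (rule key_identity[OF HKm])
    have "(\<integral>\<^sup>+h. ennreal (1 / (real DIM('a) * norm h ^ DIM('a))) * HK h \<partial>lborel)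
        = (\<integral>\<^sup>+h. ennreal (1 / real n) * indicator K h \<partial>lborel)"
    proof (rule nn_integral_cong_AE)
      show "AE h in lborel. ennreal (1 / (real DIM('a) * norm h ^ DIM('a))) * HK h = ennreal (1 / real n) * indicator K h"
        using AE_lborel_singleton[of 0]
      proof eventually_elim
        case (elim h)
        then have "0 < norm h" by simp
        then have "ennreal (1 / (real DIM('a) * norm h ^ DIM('a))) * ennreal (norm h ^ n) = ennreal (1 / real n)"
          using n by (simp add: ennreal_mult[symmetric] n_def)
        then show ?case unfolding HK_def by (metis mult.assoc)
      qed
    qed
    also have "\<dots> = ennreal (1 / real n) * emeasure lborel K"
      by (simp add: nn_integral_cmult_indicator)
    finally have R: "(\<integral>\<^sup>+\<xi>\<in>B. (\<integral>\<^sup>+t\<in>{0<..}. HK (t *\<^sub>R \<xi>) * ennreal (1 / t) \<partial>lborel) \<partial>lborel) = ennreal (1 / real n) * emeasure lborel K"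
      using key by (simp add: B_def)
    have "(\<integral>\<^sup>+\<xi>\<in>B. (\<integral>\<^sup>+t\<in>{0<..}. HK (t *\<^sub>R \<xi>) * ennreal (1 / t) \<partial>lborel) \<partial>lborel)
        = (\<integral>\<^sup>+\<xi>\<in>B. ennreal (1 / real n) * epow (a \<xi>) (- (real n / \<sigma>)) \<partial>lborel)"
    proof (rule nn_integral_cong_AE)
      show "AE \<xi> in lborel. (\<integral>\<^sup>+t\<in>{0<..}. HK (t *\<^sub>R \<xi>) * ennreal (1 / t) \<partial>lborel) * indicator B \<xi>
          = ennreal (1 / real n) * epow (a \<xi>) (- (real n / \<sigma>)) * indicator B \<xi>"
        using AE_lborel_singleton[of 0]
      proof eventually_elim
        case (elim \<xi>)
        then have r: "0 < norm \<xi>" by simp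
        have "(\<integral>\<^sup>+t\<in>{0<..}. HK (t *\<^sub>R \<xi>) * ennreal (1 / t) \<partial>lborel)
          = (\<integral>\<^sup>+t. ennreal (norm \<xi> ^ n) * (indicator {0<..} t * indicator {t. ennreal (t powr \<sigma>) * \<Phi> \<xi> \<le> 1} t * ennreal (t ^ (n - 1))) \<partial>lborel)"
        proof (rule nn_integral_cong)
          fix t :: real
          show "HK (t *\<^sub>R \<xi>) * ennreal (1 / t) * indicator {0<..} t
            = ennreal (norm \<xi> ^ n) * (indicator {0<..} t * indicator {t. ennreal (t powr \<sigma>) * \<Phi> \<xi> \<le> 1} t * ennreal (t ^ (n - 1)))"
          proof (cases "0 < t")
            case True
            have "t ^ n = t * t ^ (n - 1)" using n by (cases n) auto
            then have tn: "t ^ n * (1 / t) = t ^ (n - 1)" using True by simp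
            have "norm (t *\<^sub>R \<xi>) ^ n * (1 / t) = (t ^ n * norm \<xi> ^ n) * (1 / t)"
              using True by (simp add: power_mult_distrib)
            also have "\<dots> = norm \<xi> ^ n * (t ^ n * (1 / t))" by (simp only: mult_ac)
            also have "\<dots> = norm \<xi> ^ n * t ^ (n - 1)" by (simp only: tn)
            finally have "ennreal (norm (t *\<^sub>R \<xi>) ^ n) * ennreal (1 / t) = ennreal (norm \<xi> ^ n) * ennreal (t ^ (n - 1))"
              using True by (simp add: ennreal_mult[symmetric])
            moreover have "(t *\<^sub>R \<xi> \<in> K) = (ennreal (t powr \<sigma>) * \<Phi> \<xi> \<le> 1)"
              using hom[OF True] by (simp add: K_def)
            ultimately show ?thesis using True unfolding HK_def
              by (auto simp: indicator_def mult_ac)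
          qed simp
        qed
        also have "\<dots> = ennreal (1 / real n) * epow (ennreal (norm \<xi> powr -\<sigma>) * \<Phi> \<xi>) (- (real n / \<sigma>))"
          using inner_K[of "norm \<xi>" \<sigma> n "\<Phi> \<xi>"] r \<sigma> n by simp
        finally show ?case by (simp add: a_def)
      qed
    qed
    also have "\<dots> = ennreal (1 / real n) * (\<integral>\<^sup>+\<xi>\<in>B. epow (a \<xi>) (- (real n / \<sigma>)) \<partial>lborel)"
      by (subst nn_integral_cmult[symmetric]) (auto simp: mult_ac)
    finally have "ennreal (1 / real n) * emeasure lborel K = ennreal (1 / real n) * (\<integral>\<^sup>+\<xi>\<in>B. epow (a \<xi>) (- (real n / \<sigma>)) \<partial>lborel)"
      using R by simp
    then show ?thesis using n by (simp add: ennreal_mult_cancel_left)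
  qed
  have stepR: "(\<integral>\<^sup>+ h. epow (ennreal (norm h)) (- \<sigma>) * E h * epow (ennreal (norm h)) (- real DIM('a)) \<partial>lborel)
      = ennreal (real n) * (\<integral>\<^sup>+\<xi>\<in>B. a \<xi> \<partial>lborel)"
  proof -
    define H where "H h = ennreal (norm h powr -\<sigma>) * E h" for h :: 'a
    have Hm[measurable]: "H \<in> borel_measurable borel" unfolding H_def by measurable
    have key: "(\<integral>\<^sup>+\<xi>\<in>ball 0 1. (\<integral>\<^sup>+t\<in>{0<..}. H (t *\<^sub>R \<xi>) * ennreal (1 / t) \<partial>lborel) \<partial>lborel)
       = (\<integral>\<^sup>+h. ennreal (1 / (real DIM('a) * norm h ^ DIM('a))) * H h \<partial>lborel)"
      by (rule key_identity[OF Hm])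
    have L: "(\<integral>\<^sup>+\<xi>\<in>B. (\<integral>\<^sup>+t\<in>{0<..}. H (t *\<^sub>R \<xi>) * ennreal (1 / t) \<partial>lborel) \<partial>lborel) = (\<integral>\<^sup>+\<xi>\<in>B. a \<xi> \<partial>lborel)"
    proof (rule nn_integral_cong_AE)
      show "AE \<xi> in lborel. (\<integral>\<^sup>+t\<in>{0<..}. H (t *\<^sub>R \<xi>) * ennreal (1 / t) \<partial>lborel) * indicator B \<xi> = a \<xi> * indicator B \<xi>"
        using AE_lborel_singleton[of 0]
      proof eventually_elim
        case (elim \<xi>)
        then have r: "0 < norm \<xi>" by simp
        have "(\<integral>\<^sup>+t\<in>{0<..}. H (t *\<^sub>R \<xi>) * ennreal (1 / t) \<partial>lborel)
            = (\<integral>\<^sup>+t. ennreal (norm \<xi> powr -\<sigma>) * (epow (ennreal t) (-\<sigma>) * E (t *\<^sub>R \<xi>) * ennreal (1/t) * indicator {0<..} t) \<partial>lborel)"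
        proof (rule nn_integral_cong)
          fix t :: real
          show "H (t *\<^sub>R \<xi>) * ennreal (1 / t) * indicator {0<..} t = ennreal (norm \<xi> powr -\<sigma>) * (epow (ennreal t) (-\<sigma>) * E (t *\<^sub>R \<xi>) * ennreal (1/t) * indicator {0<..} t)"
          proof (cases "0 < t")
            case True
            have "ennreal (norm (t *\<^sub>R \<xi>) powr -\<sigma>) = ennreal (norm \<xi> powr -\<sigma>) * epow (ennreal t) (-\<sigma>)"
              using True r by (simp add: epow_ennreal powr_mult ennreal_mult[symmetric] mult.commute)
            then show ?thesis using True by (simp add: H_def mult_ac)
          qed simp
        qed
        also have "\<dots> = a \<xi>"
          unfolding a_def \<Phi>_def by (subst nn_integral_cmult) auto
        finally show ?case by simp
      qed
    qed
    have "(\<integral>\<^sup>+ h. epow (ennreal (norm h)) (- \<sigma>) * E h * epow (ennreal (norm h)) (- real DIM('a)) \<partial>lborel)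
       = (\<integral>\<^sup>+h. ennreal (real n) * (ennreal (1 / (real DIM('a) * norm h ^ DIM('a))) * H h) \<partial>lborel)"
    proof (rule nn_integral_cong_AE)
      show "AE h in lborel. epow (ennreal (norm h)) (- \<sigma>) * E h * epow (ennreal (norm h)) (- real DIM('a))
          = ennreal (real n) * (ennreal (1 / (real DIM('a) * norm h ^ DIM('a))) * H h)"
        using AE_lborel_singleton[of 0]
      proof eventually_elim
        case (elim h)
        then have r: "0 < norm h" by simp
        have e: "norm h powr (- real n) = 1 / norm h ^ n"
          using r by (simp add: powr_minus powr_realpow divide_inverse)
        have eq: "ennreal (norm h powr (- real n)) = ennreal (real n) * ennreal (1 / (real DIM('a) * norm h ^ DIM('a)))"
          using r n unfolding e by (simp add: ennreal_mult[symmetric] n_def)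
        have "epow (ennreal (norm h)) (- \<sigma>) * E h * epow (ennreal (norm h)) (- real DIM('a))
            = ennreal (norm h powr -\<sigma>) * E h * ennreal (norm h powr (- real n))"
          using r by (simp add: epow_ennreal n_def)
        also have "\<dots> = (ennreal (real n) * ennreal (1 / (real DIM('a) * norm h ^ DIM('a)))) * (ennreal (norm h powr -\<sigma>) * E h)"
          unfolding eq by (simp only: mult_ac)
        also have "\<dots> = ennreal (real n) * (ennreal (1 / (real DIM('a) * norm h ^ DIM('a))) * H h)"
          by (simp only: H_def mult_ac)
        finally show ?case .
      qed
    qed
    also have "\<dots> = ennreal (real n) * (\<integral>\<^sup>+h. ennreal (1 / (real DIM('a) * norm h ^ DIM('a))) * H h \<partial>lborel)"
      by (rule nn_integral_cmult) measurable
    finally show ?thesis using key L by (simp add: B_def)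
  qed
  define \<omega> where "\<omega> = omega_n TYPE('a)"
  have \<omega>B: "emeasure lborel B = ennreal \<omega>"
    unfolding \<omega>_def omega_n_def B_def using emeasure_lborel_ball_finite[of "0::'a" 1]
    by (simp add: emeasure_eq_ennreal_measure)
  have \<omega>pos: "0 < \<omega>" unfolding \<omega>_def omega_n_def using content_ball_pos[of 1 "0::'a"] by simp
  define M where "M = density lborel (indicator B :: 'a \<Rightarrow> ennreal)"
  have aM[measurable]: "a \<in> borel_measurable M" unfolding M_def by measurable
  have MV: "emeasure M (space M) = ennreal \<omega>"
    unfolding M_def by (simp add: emeasure_density \<omega>B[symmetric] nn_integral_indicator)
  have intM: "(\<integral>\<^sup>+x. g x \<partial>M) = (\<integral>\<^sup>+x\<in>B. g x \<partial>lborel)" if [measurable]: "g \<in> borel_measurable borel" for g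
    unfolding M_def by (subst nn_integral_density) (auto simp: mult.commute)
  have rpos: "0 < real n / \<sigma>" using n \<sigma> by simp
  have PM: "ennreal (\<omega> powr (1 + 1/(real n / \<sigma>))) * epow (\<integral>\<^sup>+x. epow (a x) (-(real n / \<sigma>)) \<partial>M) (-1/(real n / \<sigma>)) \<le> (\<integral>\<^sup>+x. a x \<partial>M)"
    by (rule power_mean_ennreal[OF aM MV \<omega>pos rpos])
  have ex1: "1 + 1/(real n / \<sigma>) = (real DIM('a) + \<sigma>) / real DIM('a)" using n \<sigma> by (simp add: n_def field_simps)
  have ex2: "-1/(real n / \<sigma>) = - \<sigma> / real DIM('a)" using n \<sigma> by (simp add: n_def field_simps)
  have "ennreal (real DIM('a) * omega_n TYPE('a) powr ((real DIM('a) + \<sigma>) / real DIM('a)))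
           * epow (emeasure lborel {\<xi>. \<Phi> \<xi> \<le> 1}) (- \<sigma> / real DIM('a))
      = ennreal (real n) * (ennreal (\<omega> powr (1 + 1/(real n / \<sigma>))) * epow (\<integral>\<^sup>+x. epow (a x) (-(real n / \<sigma>)) \<partial>M) (-1/(real n / \<sigma>)))"
    unfolding ex1 ex2 intM[OF measurable_epow[OF am]] stepV[unfolded K_def, symmetric]
    by (simp add: \<omega>_def n_def ennreal_mult mult.assoc)
  also have "\<dots> \<le> ennreal (real n) * (\<integral>\<^sup>+x. a x \<partial>M)"
    by (rule mult_left_mono[OF PM]) simp
  also have "\<dots> = (\<integral>\<^sup>+ h. epow (ennreal (norm h)) (- \<sigma>) * E h * epow (ennreal (norm h)) (- real DIM('a)) \<partial>lborel)"
    unfolding stepR intM[OF am] ..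
  finally show ?thesis .
qed

lemma main_part1:
  fixes p q s :: real and f :: "'a::euclidean_space \<Rightarrow> real"
  assumes p: "1 \<le> p" and q: "1 \<le> q" and s: "0 < s" and f: "f \<in> borel_measurable lebesgue"
  shows "ennreal (real DIM('a) * omega_n TYPE('a) powr ((DIM('a) + s * q) / DIM('a)))
              * epow (emeasure lebesgue (polar_proj_body f s p q)) (- s * q / DIM('a))
            \<le> (\<integral>\<^sup>+ h. epow (ennreal (norm h)) (- s * q) * epow (diffLp f p h) q
                    * epow (ennreal (norm h)) (- real DIM('a)) \<partial>lebesgue)"
proof -
  obtain g where g[measurable]: "g \<in> borel_measurable borel"
    and Dg: "\<And>h. diffLp_pow f p h = (\<integral>\<^sup>+x. ennreal (\<bar>g (x + h) - g x\<bar> powr p) \<partial>lborel)"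
    using borel_rep[OF f] by blast
  define D where "D h = (\<integral>\<^sup>+x. ennreal (\<bar>g (x + h) - g x\<bar> powr p) \<partial>lborel)" for h :: 'a
  have Dm[measurable]: "D \<in> borel_measurable borel" unfolding D_def by measurable
  have E_eq: "epow (diffLp f p h) q = epow (D h) (q/p)" for h
    unfolding diffLp_def Dg D_def using p by (simp add: epow_epow)
  have Em[measurable]: "(\<lambda>h. epow (diffLp f p h) q) \<in> borel_measurable borel"
    unfolding E_eq by measurable
  have \<sigma>: "0 < s * q" using s q by simp
  define \<Phi> where "\<Phi> \<xi> = (\<integral>\<^sup>+t\<in>{0<..}. epow (ennreal t) (-(s*q)) * epow (diffLp f p (t *\<^sub>R \<xi>)) q * ennreal (1/t) \<partial>lborel)" for \<xi>
  have \<Phi>m[measurable]: "\<Phi> \<in> borel_measurable borel" unfolding \<Phi>_def by measurable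
  have K: "polar_proj_body f s p q = {\<xi>. \<Phi> \<xi> \<le> 1}"
    unfolding polar_proj_body_def polar_gauge_def \<Phi>_def using epow_le1_iff[of "1 / (s * q)"] \<sigma> by simp
  have Km: "{\<xi>. \<Phi> \<xi> \<le> 1} \<in> sets lborel" by measurable
  note P1 = part1_abstract[OF Em \<sigma>]
  have eq1: "emeasure lebesgue (polar_proj_body f s p q) = emeasure lborel {\<xi>. \<Phi> \<xi> \<le> 1}"
    unfolding K using Km by simp
  have eq2: "(\<integral>\<^sup>+ h. epow (ennreal (norm h)) (- s * q) * epow (diffLp f p h) q * epow (ennreal (norm h)) (- real DIM('a)) \<partial>lebesgue)
      = (\<integral>\<^sup>+ h. epow (ennreal (norm h)) (- (s * q)) * epow (diffLp f p h) q * epow (ennreal (norm h)) (- real DIM('a)) \<partial>lborel)"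
    by (simp add: nn_integral_completion)
  show ?thesis unfolding eq1 eq2 using P1 by (simp add: \<Phi>_def)
qed

lemma main_part2:
  fixes p q s :: real and f :: "'a::euclidean_space \<Rightarrow> real"
  assumes p: "1 \<le> p" and q: "1 \<le> q" and s: "0 < s" "s < 1" and f: "f \<in> borel_measurable lebesgue"
  shows "epow (emeasure lebesgue (polar_proj_body f s p q)) (- s * q / DIM('a))
     \<le> ennreal (((2 powr p * 2 ^ DIM('a)) powr (q/p)) * 2 powr q * max 1 (omega_n TYPE('a) powr (- q / DIM('a))))
        * epow (besov_norm f s p q) q"
proof -
  define n where "n = DIM('a)"
  have n: "0 < n" by (simp add: n_def)
  define \<omega> where "\<omega> = omega_n TYPE('a)"
  have \<omega>: "0 < \<omega>" unfolding \<omega>_def by (rule omega_pos)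
  define c where "c = (2 powr p * 2 ^ DIM('a)) powr (q/p)"
  have c: "0 < c" by (simp add: c_def)
  define \<sigma> where "\<sigma> = s * q"
  have \<sigma>: "0 < \<sigma>" "\<sigma> \<le> q" using s q by (auto simp: \<sigma>_def)
  define X where "X = epow (emeasure lebesgue (polar_proj_body f s p q)) (- s * q / DIM('a))"
  define R where "R = (\<integral>\<^sup>+ h. epow (ennreal (norm h)) (- s * q) * epow (diffLp f p h) q
                    * epow (ennreal (norm h)) (- real DIM('a)) \<partial>lebesgue)"
  define A where "A = real DIM('a) * omega_n TYPE('a) powr ((DIM('a) + s * q) / DIM('a))"
  have A: "0 < A" unfolding A_def using omega_pos[where 'a='a] by simp
  have P1: "ennreal A * X \<le> R"
    unfolding A_def X_def R_def by (rule main_part1[OF p q s(1) f])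
  obtain g where g[measurable]: "g \<in> borel_measurable borel"
    and Dg: "\<And>h. diffLp_pow f p h = (\<integral>\<^sup>+x. ennreal (\<bar>g (x + h) - g x\<bar> powr p) \<partial>lborel)"
    using borel_rep[OF f] by blast
  define D where "D h = (\<integral>\<^sup>+x. ennreal (\<bar>g (x + h) - g x\<bar> powr p) \<partial>lborel)" for h :: 'a
  have Dm[measurable]: "D \<in> borel_measurable borel" unfolding D_def by measurable
  have E_eq: "epow (diffLp f p h) q = epow (D h) (q/p)" for h
    unfolding diffLp_def Dg D_def using p by (simp add: epow_epow)
  have Dp: "epow (diffLp f p h) p = D h" for h
    unfolding diffLp_def Dg D_def using p by (simp add: epow_epow)
  define Mo where "Mo t = ennreal (1 / (t ^ DIM('a) * omega_n TYPE('a))) * (\<integral>\<^sup>+h\<in>ball 0 t. D h \<partial>lborel)" for t :: real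
  define I where "I = (\<integral>\<^sup>+t\<in>{0<..}. epow (ennreal t) (-\<sigma>) * epow (Mo t) (q/p) * ennreal (1/t) \<partial>lborel)"
  have R_eq: "R = (\<integral>\<^sup>+h. epow (ennreal (norm h)) (-\<sigma>) * epow (D h) (q/p) * epow (ennreal (norm h)) (- real DIM('a)) \<partial>lborel)"
    unfolding R_def E_eq \<sigma>_def by (simp add: nn_integral_completion)
  have P2: "R \<le> ennreal (real DIM('a) * omega_n TYPE('a)) * ennreal c * ennreal (2 powr \<sigma>) * I"
    unfolding R_eq I_def Mo_def D_def c_def by (rule part2_abstract[OF g p q \<sigma>(1)])
  have mod_eq: "epow (modulus f p t) q = epow (Mo t) (q/p)" for t
  proof -
    have "(\<integral>\<^sup>+h\<in>ball 0 t. epow (diffLp f p h) p \<partial>lebesgue) = (\<integral>\<^sup>+h\<in>ball 0 t. D h \<partial>lborel)"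
      unfolding Dp by (simp add: nn_integral_completion)
    then have "modulus f p t = epow (Mo t) (1/p)" unfolding modulus_def Mo_def by simp
    then show ?thesis using p by (simp add: epow_epow)
  qed
  have B_eq: "epow (besov_norm f s p q) q = I"
    unfolding besov_norm_def I_def using q by (simp add: epow_epow mod_eq \<sigma>_def)
  have "X = ennreal (1 / A) * (ennreal A * X)"
    using A by (simp add: mult.assoc[symmetric] ennreal_mult[symmetric])
  also have "\<dots> \<le> ennreal (1 / A) * (ennreal (real DIM('a) * omega_n TYPE('a)) * ennreal c * ennreal (2 powr \<sigma>) * I)"
    by (rule mult_left_mono[OF order_trans[OF P1 P2]]) simp
  also have "\<dots> = ennreal (1 / A * (real DIM('a) * omega_n TYPE('a)) * c * 2 powr \<sigma>) * I"
  proof -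
    have "ennreal (1 / A * (real DIM('a) * omega_n TYPE('a)) * c * 2 powr \<sigma>)
        = ennreal (1 / A * (real DIM('a) * omega_n TYPE('a)) * c) * ennreal (2 powr \<sigma>)"
      by (rule ennreal_mult'') simp
    also have "ennreal (1 / A * (real DIM('a) * omega_n TYPE('a)) * c) = ennreal (1 / A * (real DIM('a) * omega_n TYPE('a))) * ennreal c"
      by (rule ennreal_mult'') (use c in simp)
    also have "ennreal (1 / A * (real DIM('a) * omega_n TYPE('a))) = ennreal (1 / A) * ennreal (real DIM('a) * omega_n TYPE('a))"
      by (rule ennreal_mult'') (use omega_pos[where 'a='a] in simp)
    finally show ?thesis by (simp only: mult_ac)
  qed
  also have "\<dots> \<le> ennreal (c * 2 powr q * max 1 (\<omega> powr (- q / real n))) * I"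
  proof (rule mult_right_mono[OF ennreal_leI])
    have e1: "1 / A * (real DIM('a) * omega_n TYPE('a)) = \<omega> powr (- \<sigma> / real n)"
    proof -
      have "1 / A * (real DIM('a) * omega_n TYPE('a)) = \<omega> powr 1 / \<omega> powr ((real n + \<sigma>) / real n)"
        using n \<omega> unfolding A_def \<omega>_def n_def \<sigma>_def by (simp add: field_simps)
      also have "\<dots> = \<omega> powr (1 - (real n + \<sigma>) / real n)" by (simp add: powr_diff)
      also have "1 - (real n + \<sigma>) / real n = - \<sigma> / real n" using n by (simp add: field_simps)
      finally show ?thesis .
    qed
    have e2: "\<omega> powr (- \<sigma> / real n) \<le> max 1 (\<omega> powr (- q / real n))"
    proof (cases "1 \<le> \<omega>")
      case True
      have "\<omega> powr (- \<sigma> / real n) \<le> \<omega> powr 0" by (rule powr_mono) (use True \<sigma> n in auto)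
      then show ?thesis using \<omega> by simp
    next
      case False
      have "\<omega> powr (- \<sigma> / real n) \<le> \<omega> powr (- q / real n)"
        by (rule powr_mono') (use False \<sigma> n \<omega> in \<open>auto simp: divide_right_mono\<close>)
      then show ?thesis by simp
    qed
    have e3: "2 powr \<sigma> \<le> (2::real) powr q" by (rule powr_mono) (use \<sigma> in auto)
    have "\<omega> powr (- \<sigma> / real n) * c * 2 powr \<sigma> \<le> max 1 (\<omega> powr (- q / real n)) * c * 2 powr q"
      using e2 e3 c by (intro mult_mono) auto
    then show "1 / A * (real DIM('a) * omega_n TYPE('a)) * c * 2 powr \<sigma> \<le> c * 2 powr q * max 1 (\<omega> powr (- q / real n))"
      unfolding e1 by (simp add: mult_ac)
  qed simp
  finally show ?thesis unfolding X_def B_eq c_def \<omega>_def n_def by simp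
qed

theorem mainTheorem12:
  fixes p q :: real
  assumes "1 \<le> p" and "1 \<le> q"
  shows "(\<forall>(s::real) (f::'a::euclidean_space \<Rightarrow> real).
            0 < s \<and> s < 1 \<and> f \<in> borel_measurable lebesgue \<longrightarrow>
            ennreal (real DIM('a) * omega_n TYPE('a) powr ((DIM('a) + s * q) / DIM('a)))
              * epow (emeasure lebesgue (polar_proj_body f s p q)) (- s * q / DIM('a))
            \<le> (\<integral>\<^sup>+ h. epow (ennreal (norm h)) (- s * q) * epow (diffLp f p h) q
                    * epow (ennreal (norm h)) (- real DIM('a)) \<partial>lebesgue))
       \<and> (\<exists>C::real. \<forall>(s::real) (f::'a \<Rightarrow> real).
            0 < s \<and> s < 1 \<and> f \<in> borel_measurable lebesgue \<longrightarrow>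
            epow (emeasure lebesgue (polar_proj_body f s p q)) (- s * q / DIM('a))
            \<le> ennreal C * epow (besov_norm f s p q) q)"
  using main_part1[OF assms] main_part2[OF assms] by blast

end
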